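(* Let $A \in \mathbb{R}^{n\times d}$ and let $\lbrace w_l : l \geq 0\rbrace \subset \mathbb{R}^n$ be an arbitrary sequence. Let $\mathcal{R}_0 = \lbrace 0 \rbrace \subset \mathbb{R}^d$ and $\mathcal{R}_l = \mathrm{span}\lbrace A'w_0,\ldots,A'w_{l-1}\rbrace$ for $l \geq 1$. Let $S_0 = I_d$ and for $l \geq 0$ define $$S_{l+1} = \begin{cases} S_l - \dfrac{S_l A' w_l w_l' A S_l}{w_l' A S_l A' w_l} & \text{if } S_l A' w_l \neq 0,\\ S_l & \text{otherwise.}\end{cases}$$ Then for every $l \geq 0$, $S_l$ is an orthogonal projection matrix onto $\mathcal{R}_l^{\perp}$.
   Context: $A'$ denotes the transpose of $A$; $I_d$ is the $d\times d$ identity matrix. *)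

theory Defs
  imports "HOL-Analysis.Analysis"
begin

primrec Sseq :: "real^'d^'n \<Rightarrow> (nat \<Rightarrow> real^'n) \<Rightarrow> nat \<Rightarrow> real^'d^'d" where
  "Sseq A w 0 = mat 1"
| "Sseq A w (Suc l) =
     (let S = Sseq A w l; u = S *v (transpose A *v w l) in
      if u \<noteq> 0
      then S - (1 / (w l \<bullet> (A *v u))) *\<^sub>R
               ((S ** transpose A ** (\<chi> i j. w l $ i * w l $ j)) ** A ** S)
      else S)"

definition Rspace :: "real^'d^'n \<Rightarrow> (nat \<Rightarrow> real^'n) \<Rightarrow> nat \<Rightarrow> (real^'d) set" where
  "Rspace A w l = span ((\<lambda>i. transpose A *v w i) ` {..<l})"

definition orth_proj_matrix_onto :: "real^'d^'d \<Rightarrow> (real^'d) set \<Rightarrow> bool" where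
  "orth_proj_matrix_onto P V \<longleftrightarrow>
     transpose P = P \<and> P ** P = P \<and> range (\<lambda>x. P *v x) = V"

end

theory Submission
  imports Defs
begin

lemma sym_inner:
  fixes S :: "real^'d^'d"
  assumes "transpose S = S"
  shows "(S *v x) \<bullet> y = x \<bullet> (S *v y)"
proof -
  have "x \<bullet> (S *v y) = (x v* S) \<bullet> y" by (simp add: dot_lmul_matrix)
  also have "x v* S = transpose S *v x" by simp
  finally show ?thesis using assms by simp
qed

lemma inner_sym_transpose:
  fixes S :: "real^'d^'d"
  assumes "\<And>x y. (S *v x) \<bullet> y = x \<bullet> (S *v y)"
  shows "transpose S = S"
proof -
  have "transpose S *v x = S *v x" for x
  proof -
    have "(transpose S *v x) \<bullet> y = (S *v x) \<bullet> y" for y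
      using assms[of x y] by (simp add: dot_lmul_matrix)
    then have "(transpose S *v x - S *v x) \<bullet> (transpose S *v x - S *v x) = 0"
      by (simp add: inner_diff_left)
    then show ?thesis by simp
  qed
  then show ?thesis by (simp add: matrix_eq)
qed

lemma W_apply:
  fixes w :: "real^'n"
  shows "(\<chi> i j. w $ i * w $ j) *v y = (w \<bullet> y) *\<^sub>R w"
  by (simp add: vec_eq_iff matrix_vector_mult_def inner_vec_def sum_distrib_left ac_simps)

lemma inner_A:
  fixes A :: "real^'d^'n"
  shows "w \<bullet> (A *v y) = (transpose A *v w) \<bullet> y"
  by (simp add: dot_lmul_matrix)

lemma M_apply:
  fixes A :: "real^'d^'n" and S :: "real^'d^'d"
  shows "((S ** transpose A ** (\<chi> i j. w $ i * w $ j)) ** A ** S) *v x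
     = ((transpose A *v w) \<bullet> (S *v x)) *\<^sub>R (S *v (transpose A *v w))"
  by (simp only: matrix_vector_mul_assoc[symmetric] W_apply inner_A
      matrix_vector_mult_scaleR)

definition good :: "real^'d^'d \<Rightarrow> (real^'d) set \<Rightarrow> bool" where
  "good S V \<longleftrightarrow> transpose S = S \<and> (\<forall>x. S *v (S *v x) = S *v x) \<and> range (\<lambda>x. S *v x) = V"

lemma good_step:
  fixes A :: "real^'d^'n"
  shows "good (Sseq A w l) (orthogonal_comp (Rspace A w l))"
proof (induction l)
  case 0
  have "Rspace A w 0 = {0}" by (simp add: Rspace_def)
  then show ?case by (simp add: good_def)
next
  case (Suc l)
  define S where "S = Sseq A w l"
  define v where "v = transpose A *v w l"
  define u where "u = S *v v"
  define V where "V = Rspace A w l"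
  have sym: "transpose S = S" and idem: "\<And>x. S *v (S *v x) = S *v x"
    and rng: "range (\<lambda>x. S *v x) = orthogonal_comp V"
    using Suc.IH unfolding good_def S_def[symmetric] V_def[symmetric] by blast+
  have sub: "subspace V" unfolding V_def Rspace_def by simp
  have eqspan: "orthogonal_comp (span B) = orthogonal_comp B" for B :: "(real^'d) set"
  proof
    show "orthogonal_comp (span B) \<subseteq> orthogonal_comp B"
      by (rule orthogonal_comp_anti_mono[OF span_superset])
    show "orthogonal_comp B \<subseteq> orthogonal_comp (span B)"
    proof
      fix x assume x: "x \<in> orthogonal_comp B"
      have "B \<subseteq> {y. orthogonal y x}" using x by (auto simp: orthogonal_comp_def)
      moreover have "subspace {y. orthogonal y x}"
        by (auto simp: subspace_def orthogonal_def inner_add_left)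
      ultimately have "span B \<subseteq> {y. orthogonal y x}" by (rule span_minimal)
      then show "x \<in> orthogonal_comp (span B)" by (auto simp: orthogonal_comp_def)
    qed
  qed
  define G where "G = (\<lambda>i. transpose A *v w i) ` {..<l}"
  have RS: "Rspace A w (Suc l) = span (insert v G)"
    unfolding Rspace_def v_def G_def by (simp only: lessThan_Suc image_insert)
  have VG: "V = span G" unfolding V_def Rspace_def G_def by (rule refl)
  have ortho_ins: "orthogonal_comp (Rspace A w (Suc l)) = {x. x \<in> orthogonal_comp V \<and> v \<bullet> x = 0}"
  proof -
    have h1: "orthogonal_comp (Rspace A w (Suc l)) = orthogonal_comp (insert v G)"
      unfolding RS by (rule eqspan)
    have h2: "orthogonal_comp V = orthogonal_comp G"
      unfolding VG by (rule eqspan)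
    have h3: "orthogonal_comp (insert v G) = {x. x \<in> orthogonal_comp G \<and> v \<bullet> x = 0}"
      by (auto simp: orthogonal_comp_def orthogonal_def)
    show ?thesis unfolding h2 h1 h3 by (rule refl)
  qed
  have inS: "S *v y = y" if "y \<in> orthogonal_comp V" for y
  proof -
    have "y \<in> range (\<lambda>x. S *v x)" unfolding rng by (rule that)
    then obtain z where "y = S *v z" by (rule rangeE)
    then show ?thesis by (simp only: idem)
  qed
  show ?case
  proof (cases "u = 0")
    case True
    have step: "Sseq A w (Suc l) = S"
      using True unfolding S_def u_def v_def by (simp only: Sseq.simps Let_def simp_thms if_False if_True)
    have "v \<in> orthogonal_comp (orthogonal_comp V)"
      unfolding orthogonal_comp_def[of "orthogonal_comp V"] orthogonal_def mem_Collect_eq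
    proof
      fix y assume hy: "y \<in> orthogonal_comp V"
      have "y \<bullet> v = (S *v y) \<bullet> v" by (simp only: inS[OF hy])
      also have "\<dots> = y \<bullet> u" unfolding u_def by (rule sym_inner[OF sym])
      also have "\<dots> = 0" unfolding True by (rule inner_zero_right)
      finally show "y \<bullet> v = 0" .
    qed
    then have vV: "v \<in> V" unfolding orthogonal_comp_self[OF sub] .
    have eqV: "orthogonal_comp (Rspace A w (Suc l)) = orthogonal_comp V"
      unfolding ortho_ins
    proof (rule set_eqI)
      fix x
      have "x \<in> orthogonal_comp V \<Longrightarrow> v \<bullet> x = 0"
        using vV unfolding orthogonal_comp_def orthogonal_def mem_Collect_eq by blast
      then show "x \<in> {x. x \<in> orthogonal_comp V \<and> v \<bullet> x = 0} \<longleftrightarrow> x \<in> orthogonal_comp V"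
        unfolding mem_Collect_eq by blast
    qed
    show ?thesis unfolding step eqV using Suc.IH unfolding S_def V_def .
  next
    case False
    have uu: "v \<bullet> u = u \<bullet> u"
    proof -
      have "v \<bullet> u = v \<bullet> (S *v u)" unfolding u_def using idem by simp
      also have "\<dots> = u \<bullet> u" unfolding u_def by (rule sym_inner[OF sym, symmetric])
      finally show ?thesis .
    qed
    have vSx: "v \<bullet> (S *v x) = u \<bullet> x" for x
      unfolding u_def by (rule sym_inner[OF sym, symmetric])
    have uupos: "u \<bullet> u \<noteq> 0" using False by simp
    have app: "Sseq A w (Suc l) *v x = S *v x - ((u \<bullet> x) / (u \<bullet> u)) *\<^sub>R u" for x
    proof -
      have den: "w l \<bullet> (A *v u) = u \<bullet> u" unfolding inner_A v_def[symmetric] by (rule uu)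
      have "Sseq A w (Suc l) = S - (1 / (w l \<bullet> (A *v u))) *\<^sub>R
               ((S ** transpose A ** (\<chi> i j. w l $ i * w l $ j)) ** A ** S)"
        using False unfolding S_def u_def v_def by (simp only: Sseq.simps Let_def simp_thms if_False if_True)
      then have "Sseq A w (Suc l) *v x = S *v x - (1 / (u \<bullet> u)) *\<^sub>R
               (((S ** transpose A ** (\<chi> i j. w l $ i * w l $ j)) ** A ** S) *v x)"
        by (simp only: matrix_vector_mult_diff_rdistrib den scaleR_matrix_vector_assoc)
      also have "((S ** transpose A ** (\<chi> i j. w l $ i * w l $ j)) ** A ** S) *v x
           = (u \<bullet> x) *\<^sub>R u"
        unfolding M_apply vSx[unfolded v_def] u_def[unfolded v_def, symmetric] ..
      finally show ?thesis by simp

    qed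
    define c where "c = u \<bullet> u"
    have Su: "S *v u = u" unfolding u_def using idem by simp
    have uSx: "u \<bullet> (S *v x) = u \<bullet> x" for x
      using sym_inner[OF sym, of u x] Su by simp
    define T where "T = Sseq A w (Suc l)"
    have app': "T *v x = S *v x - ((u \<bullet> x) / c) *\<^sub>R u" for x
      unfolding T_def c_def by (rule app)
    have cnz: "c \<noteq> 0" using uupos c_def by simp
    have g1: "transpose (T) = T"
    proof (rule inner_sym_transpose)
      fix x y
      show "(T *v x) \<bullet> y = x \<bullet> (T *v y)"
        unfolding app' using sym_inner[OF sym, of x y]
        by (simp add: inner_diff_left inner_diff_right inner_commute)
    qed
    have g2: "T *v (T *v x) = T *v x" for x
    proof -
      have "u \<bullet> (T *v x) = 0"
        unfolding app' using cnz uSx[of x] by (simp add: inner_diff_right c_def)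
      moreover have "S *v (T *v x) = T *v x"
        unfolding app' by (simp add: matrix_vector_mult_diff_distrib idem Su
            matrix_vector_mult_scaleR)
      ultimately show ?thesis unfolding app'[of "T *v x"] by simp
    qed
    have sV: "subspace (orthogonal_comp V)" by (rule subspace_orthogonal_comp)
    have g3: "range (\<lambda>x. T *v x) = orthogonal_comp (Rspace A w (Suc l))"
      unfolding ortho_ins
    proof (intro set_eqI iffI)
      fix y assume "y \<in> range (\<lambda>x. T *v x)"
      then obtain x where y: "y = S *v x - ((u \<bullet> x) / c) *\<^sub>R u" using app' by auto
      have "S *v x \<in> orthogonal_comp V" "u \<in> orthogonal_comp V"
        using rng unfolding u_def by auto
      then have "y \<in> orthogonal_comp V" unfolding y using sV
        by (simp add: subspace_diff subspace_scale)
      moreover have "v \<bullet> y = 0"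
        unfolding y using vSx[of x] uu cnz by (simp add: inner_diff_right c_def)
      ultimately show "y \<in> {x \<in> orthogonal_comp V. v \<bullet> x = 0}" by simp
    next
      fix y assume "y \<in> {x \<in> orthogonal_comp V. v \<bullet> x = 0}"
      then have y: "y \<in> orthogonal_comp V" "v \<bullet> y = 0" by auto
      have Sy: "S *v y = y" using inS y(1) .
      have "u \<bullet> y = 0" using vSx[of y] Sy y(2) by simp
      then have "T *v y = y" unfolding app' Sy by simp
      then show "y \<in> range (\<lambda>x. T *v x)" by (metis rangeI)
    qed
    show ?thesis unfolding good_def using g1 g2 g3 unfolding T_def by blast
  qed
qed

theorem mainTheorem2:
  fixes A :: "real^'d^'n" and w :: "nat \<Rightarrow> real^'n" and l :: nat
  shows "orth_proj_matrix_onto (Sseq A w l) (orthogonal_comp (Rspace A w l))"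
proof -
  have g: "good (Sseq A w l) (orthogonal_comp (Rspace A w l))" by (rule good_step)
  then have "Sseq A w l ** Sseq A w l = Sseq A w l"
    unfolding good_def by (simp add: matrix_eq matrix_vector_mul_assoc[symmetric])
  with g show ?thesis unfolding good_def orth_proj_matrix_onto_def by blast
qed

end
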